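(* Let $a,b$ be integers with $0<b<a$, let $S=\langle a,a+1,\ldots,a+b\rangle$ with conductor $c$, and let $m\ge 2c-1$. Let $q$ be a nonnegative integer and $j\in\{0,\ldots,a-1\}$. Then $$\mathrm D(m,m+qa+j)=\mathrm D(m)\cup\Big\{m-(ka+r)\ \Big|\ 0\le r\le a-j-1,\ \tfrac{r+j}{b}-q\le k<\tfrac{r}{b}\Big\}\cup\Big\{m-(ka+r)\ \Big|\ a-j\le r\le a-1,\ \tfrac{r+j-(a+b)}{b}-q\le k<\tfrac{r}{b}\Big\},$$ where $k,r$ range over integers, and this union is disjoint.
   Context: The conductor $c$ of a numerical semigroup $S$ is the least element of $S$ with $c+n\in S$ for all $n\in\mathbb N$. For $x\in S$, $\mathrm D(x)=\{\alpha\in S\mid x-\alpha\in S\}$, and $\mathrm D(x_1,\ldots,x_t)=\mathrm D(x_1)\cup\cdots\cup\mathrm D(x_t)$. *)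

theory Defs
  imports Complex_Main
begin

inductive_set gen_semigroup :: "int set \<Rightarrow> int set" for G :: "int set" where
  zero: "0 \<in> gen_semigroup G"
| add: "x \<in> gen_semigroup G \<Longrightarrow> g \<in> G \<Longrightarrow> x + g \<in> gen_semigroup G"

definition conductor :: "int set \<Rightarrow> int" where
  "conductor S = (LEAST c. c \<in> S \<and> (\<forall>n::nat. c + int n \<in> S))"

definition Dset :: "int set \<Rightarrow> int \<Rightarrow> int set" where
  "Dset S x = {\<alpha> \<in> S. x - \<alpha> \<in> S}"

end

theory Submission
  imports Defs
begin

lemma gen_bounds:
  assumes "y \<in> gen_semigroup {a..a+b}"
  shows "\<exists>n::int. 0 \<le> n \<and> n*a \<le> y \<and> y \<le> n*(a+b)"
  using assms
proof induction
  case zero then show ?case by (intro exI[of _ 0]) auto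
next
  case (add x g)
  from add.IH obtain n where "0 \<le> n" "n*a \<le> x" "x \<le> n*(a+b)" by blast
  moreover have "a \<le> g" "g \<le> a+b" using add by auto
  ultimately show ?case
    by (intro exI[of _ "n+1"]) (auto simp: algebra_simps)
qed

lemma gen_bounds_rev:
  assumes "0 < a" "0 \<le> b"
  shows "int n*a \<le> y \<Longrightarrow> y \<le> int n*(a+b) \<Longrightarrow> y \<in> gen_semigroup {a..a+b}"
proof (induction n arbitrary: y)
  case 0 then show ?case by (simp add: gen_semigroup.zero)
next
  case (Suc n)
  define g where "g = min (a+b) (y - int n*a)"
  have g: "g \<in> {a..a+b}" using Suc.prems assms unfolding g_def by (auto simp: algebra_simps)
  have "int n * a \<le> y - g" unfolding g_def by auto
  moreover have "y - g \<le> int n*(a+b)" using Suc.prems assms unfolding g_def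
    by (auto simp: algebra_simps min_def)
  ultimately have "y - g \<in> gen_semigroup {a..a+b}" using Suc.IH by blast
  from gen_semigroup.add[OF this g] show ?case by simp
qed

lemma memS:
  fixes a b k r :: int
  assumes "0 < a" "0 < b" "0 \<le> r" "r < a"
  shows "(k*a + r \<in> gen_semigroup {a..a+b}) = (r \<le> k*b)"
proof
  assume "k*a + r \<in> gen_semigroup {a..a+b}"
  then obtain n where n: "0 \<le> n" "n*a \<le> k*a+r" "k*a+r \<le> n*(a+b)" using gen_bounds by blast
  have "n*a < (k+1)*a" using n assms by (simp add: algebra_simps)
  then have "n < k+1" using assms(1) by (simp add: mult_less_cancel_right)
  then have "n \<le> k" by simp
  then have "n*(a+b) \<le> k*(a+b)" using assms by (simp add: mult_right_mono)
  then show "r \<le> k*b" using n by (simp add: algebra_simps)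
next
  assume h: "r \<le> k*b"
  then have "0 \<le> k*b" using assms by simp
  then have "0 \<le> k" using assms by (simp add: zero_le_mult_iff)
  then obtain n where "k = int n" by (metis nonneg_eq_int)
  then show "k*a + r \<in> gen_semigroup {a..a+b}"
    using gen_bounds_rev[of a b n "k*a+r"] assms h by (simp add: algebra_simps)
qed

lemma conductor_ge:
  fixes a b x :: int
  assumes "0 < a" "0 < b" "x \<ge> conductor (gen_semigroup {a..a+b})"
  shows "x \<in> gen_semigroup {a..a+b}"
proof -
  let ?S = "gen_semigroup {a..a+b}"
  let ?P = "\<lambda>c. c \<in> ?S \<and> (\<forall>n::nat. c + int n \<in> ?S)"
  have big: "y \<in> ?S" if "y \<ge> a*a" for y
  proof -
    have y: "y = (y div a)*a + y mod a" by simp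
    have "(a*a) div a \<le> y div a" using that assms by (intro zdiv_mono1) auto
    then have ya: "y div a \<ge> a" using assms by simp
    have "(y div a)*b \<ge> a*b" using ya assms by (intro mult_right_mono) auto
    moreover have "a*b \<ge> a*1" using assms by (intro mult_left_mono) auto
    ultimately have "(y div a)*b \<ge> a*1" by linarith
    then have "y mod a \<le> (y div a)*b" using pos_mod_bound[OF assms(1), of y] by linarith
    then show ?thesis using memS[of a b "y mod a" "y div a"] assms y by simp
  qed
  have Pex: "?P (int (nat (a*a)))" using big assms by simp
  define n0 where "n0 = (LEAST n::nat. ?P (int n))"
  have Pn0: "?P (int n0)" unfolding n0_def by (rule LeastI[of _ "nat (a*a)"]) (use Pex in auto)
  have low: "int n0 \<le> y" if "?P y" for y
  proof -
    have "y \<in> ?S" using that by blast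
    then obtain n where n: "0 \<le> n" "n*a \<le> y" using gen_bounds[of y a b] by blast
    have "0 \<le> n*a" using n assms by simp
    then have "y \<ge> 0" using n by linarith
    then have "?P (int (nat y))" using that by simp
    then have "n0 \<le> nat y" unfolding n0_def by (rule Least_le)
    then show ?thesis using \<open>y \<ge> 0\<close> by simp
  qed
  have "conductor ?S = int n0" unfolding conductor_def
    by (rule Least_equality) (use Pn0 low in auto)
  then have "x - int n0 \<ge> 0" using assms by simp
  then obtain d where "x - int n0 = int d" by (metis nonneg_eq_int)
  then show ?thesis using Pn0 by (metis add.commute diff_add_cancel)
qed

lemma rdiv1: "0 < (b::int) \<Longrightarrow> (real_of_int u / real_of_int b - real_of_int q \<le> real_of_int k) = (u \<le> (k+q)*b)"
proof -
  assume b: "0 < b"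
  have "(real_of_int u / real_of_int b - real_of_int q \<le> real_of_int k) = (real_of_int u / real_of_int b \<le> real_of_int (k+q))" by auto
  also have "\<dots> = (real_of_int u \<le> real_of_int (k+q) * real_of_int b)" using b by (simp add: pos_divide_le_eq)
  also have "\<dots> = (u \<le> (k+q)*b)" by (metis of_int_le_iff of_int_mult)
  finally show ?thesis .
qed

lemma rdiv2: "0 < (b::int) \<Longrightarrow> (real_of_int k < real_of_int r / real_of_int b) = (k*b < r)"
proof -
  assume b: "0 < b"
  have "(real_of_int k < real_of_int r / real_of_int b) = (real_of_int k * real_of_int b < real_of_int r)" using b by (simp add: pos_less_divide_eq)
  also have "\<dots> = (k*b < r)" by (metis of_int_less_iff of_int_mult)
  finally show ?thesis .
qed

lemma divmod_uniq:
  fixes x k r a :: int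
  assumes "x = k*a + r" "0 \<le> r" "r < a"
  shows "k = x div a \<and> r = x mod a"
  using assms by (simp add: div_pos_pos_trivial mod_pos_pos_trivial)

theorem lemma4p2:
  fixes a b m q j :: int
  defines "S \<equiv> gen_semigroup {a..a+b}"
  defines "c \<equiv> conductor S"
  defines "A \<equiv> {m - (k*a + r) | k r. 0 \<le> r \<and> r \<le> a - j - 1 \<and>
                  real_of_int (r + j) / real_of_int b - real_of_int q \<le> real_of_int k \<and>
                  real_of_int k < real_of_int r / real_of_int b}"
  defines "B \<equiv> {m - (k*a + r) | k r. a - j \<le> r \<and> r \<le> a - 1 \<and>
                  real_of_int (r + j - (a + b)) / real_of_int b - real_of_int q \<le> real_of_int k \<and>
                  real_of_int k < real_of_int r / real_of_int b}"
  assumes "0 < b" and "b < a"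
    and "m \<ge> 2 * c - 1"
    and "q \<ge> 0"
    and "0 \<le> j" and "j \<le> a - 1"
  shows "Dset S m \<union> Dset S (m + q*a + j) = Dset S m \<union> A \<union> B
         \<and> Dset S m \<inter> A = {} \<and> Dset S m \<inter> B = {} \<and> A \<inter> B = {}"
proof -
  have a0: "0 < a" using assms by simp
  have A': "A = {m - (k*a + r) | k r. 0 \<le> r \<and> r \<le> a - j - 1 \<and> r + j \<le> (k+q)*b \<and> k*b < r}"
    unfolding A_def rdiv1[OF \<open>0<b\<close>] rdiv2[OF \<open>0<b\<close>] by (rule refl)
  have B': "B = {m - (k*a + r) | k r. a - j \<le> r \<and> r \<le> a - 1 \<and> r + j - (a+b) \<le> (k+q)*b \<and> k*b < r}"
    unfolding B_def rdiv1[OF \<open>0<b\<close>] rdiv2[OF \<open>0<b\<close>] by (rule refl)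
  have key: "\<alpha> \<in> A \<union> B \<longleftrightarrow> \<alpha> \<in> Dset S (m + q*a + j) \<and> \<alpha> \<notin> Dset S m" for \<alpha>
  proof -
    define x where "x = m - \<alpha>"
    define k where "k = x div a"
    define r where "r = x mod a"
    have xkr: "x = k*a + r" unfolding k_def r_def by simp
    have r0: "0 \<le> r" "r < a" unfolding r_def using a0 by auto
    have xS: "(x \<in> S) = (r \<le> k*b)" unfolding S_def xkr using memS a0 assms r0 by simp
    have inA: "\<alpha> \<in> A \<longleftrightarrow> r \<le> a - j - 1 \<and> r + j \<le> (k+q)*b \<and> k*b < r"
    proof
      assume "\<alpha> \<in> A"
      then obtain k' r' where h: "\<alpha> = m - (k'*a+r')" "0 \<le> r'" "r' \<le> a - j - 1" "r' + j \<le> (k'+q)*b" "k'*b < r'"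
        unfolding A' by blast
      then have "k' = k \<and> r' = r" using divmod_uniq[of x k' a r'] assms
        unfolding k_def r_def x_def by simp
      then show "r \<le> a - j - 1 \<and> r + j \<le> (k+q)*b \<and> k*b < r" using h by simp
    next
      assume "r \<le> a - j - 1 \<and> r + j \<le> (k+q)*b \<and> k*b < r"
      moreover have "\<alpha> = m - (k*a+r)" using xkr x_def by simp
      ultimately show "\<alpha> \<in> A" unfolding A' using r0 by blast
    qed
    have inB: "\<alpha> \<in> B \<longleftrightarrow> a - j \<le> r \<and> r + j - (a+b) \<le> (k+q)*b \<and> k*b < r"
    proof
      assume "\<alpha> \<in> B"
      then obtain k' r' where h: "\<alpha> = m - (k'*a+r')" "a - j \<le> r'" "r' \<le> a - 1" "r' + j - (a+b) \<le> (k'+q)*b" "k'*b < r'"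
        unfolding B' by blast
      then have "k' = k \<and> r' = r" using divmod_uniq[of x k' a r'] assms
        unfolding k_def r_def x_def by simp
      then show "a - j \<le> r \<and> r + j - (a+b) \<le> (k+q)*b \<and> k*b < r" using h by simp
    next
      assume "a - j \<le> r \<and> r + j - (a+b) \<le> (k+q)*b \<and> k*b < r"
      moreover have "\<alpha> = m - (k*a+r)" using xkr x_def by simp
      moreover have "r \<le> a - 1" using r0 by simp
      ultimately show "\<alpha> \<in> B" unfolding B' using r0 by blast
    qed
    have MS: "(x + q*a + j \<in> S) = (if r + j < a then r + j \<le> (k+q)*b else r + j - (a+b) \<le> (k+q)*b)"
    proof (cases "r + j < a")
      case True
      have "x + q*a + j = (k+q)*a + (r+j)" using xkr by (simp add: algebra_simps)
      then have e: "(x + q*a + j \<in> S) = ((k+q)*a + (r+j) \<in> S)" by metis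
      show ?thesis unfolding e using True memS[of a b "r+j" "k+q"] a0 assms(5) assms(9) r0 unfolding S_def by simp
    next
      case False
      have "x + q*a + j = (k+q+1)*a + (r+j-a)" using xkr by (simp add: algebra_simps)
      then have e: "(x + q*a + j \<in> S) = ((k+q+1)*a + (r+j-a) \<in> S)" by metis
      have f: "(r + j - a \<le> (k+q+1)*b) = (r + j - (a+b) \<le> (k+q)*b)" by (simp add: algebra_simps)
      have "0 \<le> r + j - a" "r + j - a < a" using False r0 assms(10) by auto
      then show ?thesis unfolding e using False memS[of a b "r+j-a" "k+q+1"] a0 assms(5) f unfolding S_def by simp
    qed
    have D1: "\<alpha> \<in> Dset S m \<longleftrightarrow> \<alpha> \<in> S \<and> x \<in> S" unfolding Dset_def x_def by simp
    have D2: "\<alpha> \<in> Dset S (m + q*a + j) \<longleftrightarrow> \<alpha> \<in> S \<and> x + q*a + j \<in> S" unfolding Dset_def x_def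
      by (simp add: algebra_simps)
    have autoS: "\<alpha> \<in> S" if "x \<notin> S"
    proof -
      have "x < c" using that conductor_ge[of a b x] a0 assms unfolding c_def S_def by force
      then have "\<alpha> \<ge> c" using assms unfolding x_def by simp
      then show ?thesis using conductor_ge[of a b \<alpha>] a0 assms unfolding c_def S_def by simp
    qed
    show ?thesis using inA inB MS D1 D2 autoS xS r0 by (auto split: if_splits)
  qed
  have AB: "A \<inter> B = {}"
  proof -
    { fix \<alpha> assume "\<alpha> \<in> A" "\<alpha> \<in> B"
      then obtain k r k' r' where h: "\<alpha> = m - (k*a+r)" "0 \<le> r" "r \<le> a - j - 1"
          "\<alpha> = m - (k'*a+r')" "a - j \<le> r'" "r' \<le> a - 1"
        unfolding A' B' by blast
      then have "r = (m - \<alpha>) mod a" "r' = (m - \<alpha>) mod a"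
        using divmod_uniq[of "m-\<alpha>" k a r] divmod_uniq[of "m-\<alpha>" k' a r'] assms by auto
      then have False using h by simp }
    then show ?thesis by blast
  qed
  show ?thesis using key AB by blast
qed

end
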